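(* Let $\mathbb{F}$ be a field and $n\in\{2,3,4\}$. For every integer $l$ with $1\le l\le 2^{n-2}$ there exists a unital $\mathbb{F}$-algebra $\mathcal{A}$ with $\dim\mathcal{A}=n$ and $l(\mathcal{A})=l$.
   Context: Algebras are finite-dimensional, unital, not necessarily associative. For a finite generating set $S$ of $\mathcal{A}$, a word in $S$ is any product (with any bracketing) of finitely many elements of $S$; its length is the number of factors, and $1$ is a word of length $0$. $L_i(S)$ is the linear span of all words in $S$ of length at most $i$. The length of $S$ is $l(S)=\min\{k\ge0: L_k(S)=\mathcal{A}\}$, and $l(\mathcal{A})=\max\{l(S): S\text{ a finite generating set of }\mathcal{A}\}$. *)

theory Defs
  imports Main
begin

text \<open>An n-dimensional (not necessarily associative) algebra over a field 'a is
modelled, up to isomorphism, as the coordinate space F^n (vectors nat => 'a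
vanishing outside {0..<n}) with a bilinear multiplication given by structure
constants c i j k (e_i * e_j = sum_k c i j k e_k).\<close>

type_synonym 'a vect = "nat \<Rightarrow> 'a"

definition vecs :: "nat \<Rightarrow> ('a::zero) vect set" where
  "vecs n = {v. \<forall>i\<ge>n. v i = 0}"

definition amult :: "(nat \<Rightarrow> nat \<Rightarrow> nat \<Rightarrow> 'a::field) \<Rightarrow> nat \<Rightarrow> 'a vect \<Rightarrow> 'a vect \<Rightarrow> 'a vect" where
  "amult c n x y = (\<lambda>k. if k < n then (\<Sum>i<n. \<Sum>j<n. x i * y j * c i j k) else 0)"

definition is_unit :: "(nat \<Rightarrow> nat \<Rightarrow> nat \<Rightarrow> 'a::field) \<Rightarrow> nat \<Rightarrow> 'a vect \<Rightarrow> bool" where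
  "is_unit c n u \<longleftrightarrow> u \<in> vecs n \<and> (\<forall>x\<in>vecs n. amult c n u x = x \<and> amult c n x u = x)"

definition unital_alg :: "(nat \<Rightarrow> nat \<Rightarrow> nat \<Rightarrow> 'a::field) \<Rightarrow> nat \<Rightarrow> bool" where
  "unital_alg c n \<longleftrightarrow> (\<exists>u. is_unit c n u)"

definition aone :: "(nat \<Rightarrow> nat \<Rightarrow> nat \<Rightarrow> 'a::field) \<Rightarrow> nat \<Rightarrow> 'a vect" where
  "aone c n = (SOME u. is_unit c n u)"

definition lspan :: "('a::field) vect set \<Rightarrow> 'a vect set" where
  "lspan S = {x. \<exists>T f. finite T \<and> T \<subseteq> S \<and> x = (\<lambda>k. \<Sum>v\<in>T. f v * v k)}"

inductive word :: "(nat \<Rightarrow> nat \<Rightarrow> nat \<Rightarrow> 'a::field) \<Rightarrow> nat \<Rightarrow> 'a vect set \<Rightarrow> nat \<Rightarrow> 'a vect \<Rightarrow> bool"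
  for c n S where
  word_one: "word c n S 0 (aone c n)"
| word_gen: "s \<in> S \<Longrightarrow> word c n S 1 s"
| word_mult: "word c n S i x \<Longrightarrow> word c n S j y \<Longrightarrow> word c n S (i + j) (amult c n x y)"

definition Lsp :: "(nat \<Rightarrow> nat \<Rightarrow> nat \<Rightarrow> 'a::field) \<Rightarrow> nat \<Rightarrow> 'a vect set \<Rightarrow> nat \<Rightarrow> 'a vect set" where
  "Lsp c n S i = lspan {x. \<exists>j\<le>i. word c n S j x}"

definition generating :: "(nat \<Rightarrow> nat \<Rightarrow> nat \<Rightarrow> 'a::field) \<Rightarrow> nat \<Rightarrow> 'a vect set \<Rightarrow> bool" where
  "generating c n S \<longleftrightarrow> finite S \<and> S \<subseteq> vecs n \<and> (\<exists>k. Lsp c n S k = vecs n)"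

definition set_length :: "(nat \<Rightarrow> nat \<Rightarrow> nat \<Rightarrow> 'a::field) \<Rightarrow> nat \<Rightarrow> 'a vect set \<Rightarrow> nat" where
  "set_length c n S = (LEAST k. Lsp c n S k = vecs n)"

definition alg_length :: "(nat \<Rightarrow> nat \<Rightarrow> nat \<Rightarrow> 'a::field) \<Rightarrow> nat \<Rightarrow> nat \<Rightarrow> bool" where
  "alg_length c n l \<longleftrightarrow> (\<exists>S. generating c n S \<and> set_length c n S = l)
      \<and> (\<forall>S. generating c n S \<longrightarrow> set_length c n S \<le> l)"

end

theory Submission
  imports Defs
begin


lemma lspan_zero: "(\<lambda>k. 0) \<in> lspan S"
  unfolding lspan_def by (rule CollectI, rule exI[of _ "{}"]) auto

lemma lspan_base: "v \<in> S \<Longrightarrow> v \<in> lspan S"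
  unfolding lspan_def by (rule CollectI, rule exI[of _ "{v}"], rule exI[of _ "\<lambda>_. 1"]) auto

lemma lspan_smult: "x \<in> lspan S \<Longrightarrow> (\<lambda>k. a * x k) \<in> lspan S"
proof -
  assume "x \<in> lspan S"
  then obtain T f where T: "finite T" "T \<subseteq> S" "x = (\<lambda>k. \<Sum>v\<in>T. f v * v k)"
    unfolding lspan_def by blast
  show ?thesis unfolding lspan_def
    by (rule CollectI, rule exI[of _ T], rule exI[of _ "\<lambda>v. a * f v"])
       (simp add: T sum_distrib_left mult.assoc)
qed

lemma lspan_add: "x \<in> lspan S \<Longrightarrow> y \<in> lspan S \<Longrightarrow> (\<lambda>k. x k + y k) \<in> lspan S"
proof -
  assume "x \<in> lspan S" "y \<in> lspan S"
  then obtain T f U g where T: "finite T" "T \<subseteq> S" "x = (\<lambda>k. \<Sum>v\<in>T. f v * v k)"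
    and U: "finite U" "U \<subseteq> S" "y = (\<lambda>k. \<Sum>v\<in>U. g v * v k)"
    unfolding lspan_def by blast
  define h where "h v = (if v \<in> T then f v else 0) + (if v \<in> U then g v else 0)" for v
  have 1: "(\<Sum>v\<in>T \<union> U. (if v \<in> T then f v else 0) * v k) = (\<Sum>v\<in>T. f v * v k)" for k
    by (rule sum.mono_neutral_cong_right) (auto simp: T U)
  have 2: "(\<Sum>v\<in>T \<union> U. (if v \<in> U then g v else 0) * v k) = (\<Sum>v\<in>U. g v * v k)" for k
    by (rule sum.mono_neutral_cong_right) (auto simp: T U)
  have "(\<lambda>k. x k + y k) = (\<lambda>k. \<Sum>v\<in>T \<union> U. h v * v k)"
    by (rule ext) (simp add: h_def distrib_right sum.distrib 1 2 T U)
  then show ?thesis unfolding lspan_def using T U by blast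
qed

lemma lspan_sum: "finite I \<Longrightarrow> (\<forall>i\<in>I. g i \<in> lspan S) \<Longrightarrow> (\<lambda>k. \<Sum>i\<in>I. a i * g i k) \<in> lspan S"
proof (induction I rule: finite_induct)
  case empty
  then show ?case using lspan_zero by simp
next
  case (insert i I)
  have "(\<lambda>k. a i * g i k) \<in> lspan S" by (intro lspan_smult) (use insert in auto)
  then have "(\<lambda>k. a i * g i k + (\<Sum>i\<in>I. a i * g i k)) \<in> lspan S"
    using insert lspan_add by fastforce
  then show ?case using insert by simp
qed

lemma lspan_lin: "x \<in> lspan S \<Longrightarrow> y \<in> lspan S \<Longrightarrow> (\<lambda>k. a * x k + b * y k) \<in> lspan S"
  using lspan_add[OF lspan_smult lspan_smult] by blast

lemma lspan_mono: "A \<subseteq> B \<Longrightarrow> lspan A \<subseteq> lspan B"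
  unfolding lspan_def by blast

lemma lspan_subset: "A \<subseteq> lspan B \<Longrightarrow> lspan A \<subseteq> lspan B"
proof
  fix x assume A: "A \<subseteq> lspan B" and "x \<in> lspan A"
  then obtain T f where T: "finite T" "T \<subseteq> A" "x = (\<lambda>k. \<Sum>v\<in>T. f v * v k)"
    unfolding lspan_def by blast
  show "x \<in> lspan B" unfolding T(3) using lspan_sum[of T "\<lambda>v. v" B f] T A by auto
qed

lemma lspan_coord: "(\<forall>v\<in>B. v t = 0) \<Longrightarrow> x \<in> lspan B \<Longrightarrow> x t = 0"
  unfolding lspan_def by (auto intro!: sum.neutral)

lemma lspan_vecs: "B \<subseteq> vecs n \<Longrightarrow> lspan B \<subseteq> vecs n"
  unfolding vecs_def using lspan_coord[of B] by blast

definition ev :: "nat \<Rightarrow> ('a::field) vect" where "ev i = (\<lambda>k. if k = i then 1 else 0)"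

lemma ev_vecs: "i < n \<Longrightarrow> ev i \<in> vecs n" unfolding ev_def vecs_def by auto

lemma vecs_lspan: "(\<forall>i<n. ev i \<in> lspan B) \<Longrightarrow> vecs n \<subseteq> lspan B"
proof
  fix v :: "'a::field vect" assume A: "\<forall>i<n. ev i \<in> lspan B" and v: "v \<in> vecs n"
  have "v = (\<lambda>k. \<Sum>i\<in>{..<n}. v i * ev i k)"
  proof
    fix k show "v k = (\<Sum>i\<in>{..<n}. v i * ev i k)"
      using v by (cases "k < n") (auto simp: ev_def vecs_def if_distrib[of "(*) _"] sum.delta cong: if_cong)
  qed
  then show "v \<in> lspan B" using lspan_sum[of "{..<n}" ev B v] A by auto
qed

lemma amult_suml: "amult c n (\<lambda>k. \<Sum>v\<in>T. f v * v k) y = (\<lambda>k. \<Sum>v\<in>T. f v * amult c n v y k)"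
  unfolding amult_def
  by (rule ext) (simp add: sum_distrib_left sum_distrib_right mult.assoc sum.swap[of _ T])

lemma amult_sumr: "amult c n x (\<lambda>k. \<Sum>v\<in>T. f v * v k) = (\<lambda>k. \<Sum>v\<in>T. f v * amult c n x v k)"
  unfolding amult_def
  apply (rule ext)
  apply (simp add: sum_distrib_left sum_distrib_right sum.swap[of _ T])
  apply (intro impI sum.cong refl)
  apply (simp add: mult_ac)
  done

lemma amult_lspanl: "x \<in> lspan A \<Longrightarrow> (\<forall>a\<in>A. amult c n a y \<in> lspan C) \<Longrightarrow> amult c n x y \<in> lspan C"
proof -
  assume x: "x \<in> lspan A" and h: "\<forall>a\<in>A. amult c n a y \<in> lspan C"
  then obtain T f where T: "finite T" "T \<subseteq> A" "x = (\<lambda>k. \<Sum>v\<in>T. f v * v k)"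
    unfolding lspan_def by blast
  show ?thesis unfolding T(3) amult_suml using lspan_sum[of T "\<lambda>v. amult c n v y" C f] T h by auto
qed

lemma amult_lspanr: "y \<in> lspan B \<Longrightarrow> (\<forall>b\<in>B. amult c n x b \<in> lspan C) \<Longrightarrow> amult c n x y \<in> lspan C"
proof -
  assume y: "y \<in> lspan B" and h: "\<forall>b\<in>B. amult c n x b \<in> lspan C"
  then obtain T f where T: "finite T" "T \<subseteq> B" "y = (\<lambda>k. \<Sum>v\<in>T. f v * v k)"
    unfolding lspan_def by blast
  show ?thesis unfolding T(3) amult_sumr using lspan_sum[of T "\<lambda>v. amult c n x v" C f] T h by auto
qed

lemma amult_lspan: "x \<in> lspan A \<Longrightarrow> y \<in> lspan B \<Longrightarrow> (\<forall>a\<in>A. \<forall>b\<in>B. amult c n a b \<in> lspan C) \<Longrightarrow> amult c n x y \<in> lspan C"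
  by (meson amult_lspanl amult_lspanr)

lemma Lsp_mono: "i \<le> j \<Longrightarrow> Lsp c n S i \<subseteq> Lsp c n S j"
  unfolding Lsp_def by (rule lspan_mono) (auto simp: Collect_mono_iff intro: le_trans)

lemma word_Lsp: "word c n S j x \<Longrightarrow> j \<le> i \<Longrightarrow> x \<in> Lsp c n S i"
  unfolding Lsp_def by (rule lspan_base) blast

lemma aone_Lsp: "aone c n \<in> Lsp c n S i"
  using word_Lsp[OF word_one] by blast

lemma gen_Lsp: "s \<in> S \<Longrightarrow> 1 \<le> i \<Longrightarrow> s \<in> Lsp c n S i"
  using word_Lsp[OF word_gen] by blast

lemma Lsp_mult: "x \<in> Lsp c n S i \<Longrightarrow> y \<in> Lsp c n S j \<Longrightarrow> amult c n x y \<in> Lsp c n S (i + j)"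
  unfolding Lsp_def
  apply (erule amult_lspan, assumption)
  apply clarify
  apply (rule lspan_base)
  subgoal for a b ja jb
    by (rule CollectI, rule exI[of _ "ja + jb"]) (simp add: add_mono word_mult)
  done

lemma Lsp_lin: "x \<in> Lsp c n S i \<Longrightarrow> y \<in> Lsp c n S i \<Longrightarrow> (\<lambda>k. a * x k + b * y k) \<in> Lsp c n S i"
  unfolding Lsp_def by (rule lspan_lin)

lemma Lsp_smult: "x \<in> Lsp c n S i \<Longrightarrow> (\<lambda>k. a * x k) \<in> Lsp c n S i"
  unfolding Lsp_def by (rule lspan_smult)

lemma aone_eq: "is_unit c n u \<Longrightarrow> aone c n = u"
proof -
  assume u: "is_unit c n u"
  then have a: "is_unit c n (aone c n)" unfolding aone_def by (rule someI[of "is_unit c n"])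
  have "amult c n (aone c n) u = u" using a u unfolding is_unit_def by blast
  moreover have "amult c n (aone c n) u = aone c n" using a u unfolding is_unit_def by blast
  ultimately show ?thesis by simp
qed

lemma word_inv:
  assumes "P 0 (aone c n)" "\<And>s. s \<in> S \<Longrightarrow> P 1 s"
    "\<And>i j x y. P i x \<Longrightarrow> P j y \<Longrightarrow> P (i + j) (amult c n x y)"
  shows "word c n S i x \<Longrightarrow> P i x"
  by (induction rule: word.induct) (use assms in auto)

lemma word_closed:
  assumes "aone c n \<in> W" "S \<subseteq> W" "\<And>x y. x \<in> W \<Longrightarrow> y \<in> W \<Longrightarrow> amult c n x y \<in> W"
  shows "word c n S i x \<Longrightarrow> x \<in> W"
  by (induction rule: word.induct) (use assms in auto)

lemma Lsp_closed:
  assumes "aone c n \<in> lspan B" "S \<subseteq> lspan B" "\<And>x y. x \<in> lspan B \<Longrightarrow> y \<in> lspan B \<Longrightarrow> amult c n x y \<in> lspan B"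
  shows "Lsp c n S i \<subseteq> lspan B"
  unfolding Lsp_def by (rule lspan_subset) (use word_closed[of c n "lspan B" S, OF assms] in blast)

lemma amult_vecs: "amult c n x y \<in> vecs n" unfolding amult_def vecs_def by auto

lemma Lsp_vecs: "is_unit c n u \<Longrightarrow> S \<subseteq> vecs n \<Longrightarrow> Lsp c n S i \<subseteq> vecs n"
  unfolding Lsp_def
proof (rule lspan_vecs, rule subsetI)
  fix x assume u: "is_unit c n u" and S: "S \<subseteq> vecs n" and "x \<in> {x. \<exists>j\<le>i. word c n S j x}"
  then obtain j where w: "word c n S j x" by blast
  have "aone c n \<in> vecs n" using u aone_eq[OF u] unfolding is_unit_def by simp
  then show "x \<in> vecs n" using word_closed[of c n "vecs n" S, OF _ S amult_vecs w] by blast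
qed

lemma Lsp_top:
  assumes "\<And>j x. word c n S j x \<Longrightarrow> j < l \<Longrightarrow> x t = 0" "k < l"
  shows "x \<in> Lsp c n S k \<Longrightarrow> x t = 0"
  unfolding Lsp_def by (rule lspan_coord) (use assms in auto)

lemma set_length_eq:
  assumes "Lsp c n S l = vecs n" "\<And>k. k < l \<Longrightarrow> Lsp c n S k \<noteq> vecs n"
  shows "set_length c n S = l"
  unfolding set_length_def
  by (rule Least_equality) (use assms in \<open>auto simp: not_less[symmetric]\<close>)

lemma alg_length_intro:
  assumes "generating c n S0" "set_length c n S0 = l"
    "\<And>S. generating c n S \<Longrightarrow> Lsp c n S l = vecs n"
  shows "alg_length c n l"
  unfolding alg_length_def
proof (intro conjI allI impI)
  show "\<exists>S. generating c n S \<and> set_length c n S = l" using assms(1,2) by blast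
  fix S assume "generating c n S"
  then show "set_length c n S \<le> l" unfolding set_length_def by (intro Least_le assms(3))
qed

lemma gen_coord:
  assumes "aone c n t = 0" "\<And>x y. x t = 0 \<Longrightarrow> y t = 0 \<Longrightarrow> amult c n x y t = 0" "t < n"
    "generating c n S"
  shows "\<exists>s\<in>S. s t \<noteq> 0"
proof (rule ccontr)
  assume "\<not> (\<exists>s\<in>S. s t \<noteq> 0)"
  then have w: "word c n S j x \<Longrightarrow> x t = 0" for j x
    using word_inv[of "\<lambda>i v. v t = 0" c n S] assms(1,2) by blast
  obtain k where k: "Lsp c n S k = vecs n" using assms(4) unfolding generating_def by blast
  have "ev t \<in> Lsp c n S k" using k ev_vecs[OF assms(3)] by simp
  then have "ev t t = (0::'a)" using Lsp_top[of c n S "Suc k" t k] w by blast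
  then show False by (simp add: ev_def)
qed

lemma Lsp_ne:
  assumes "\<And>j x. word c n S j x \<Longrightarrow> j < l \<Longrightarrow> x t = 0" "t < n" "k < l"
  shows "Lsp c n S k \<noteq> vecs n"
proof
  assume k: "Lsp c n S k = vecs n"
  have "ev t \<in> Lsp c n S k" using k ev_vecs[OF assms(2)] by simp
  then have "ev t t = (0::'a)" using Lsp_top[of c n S l t k] assms by blast
  then show False by (simp add: ev_def)
qed



definition mk :: "(nat \<Rightarrow> nat \<Rightarrow> nat \<Rightarrow> 'a) \<Rightarrow> nat \<Rightarrow> nat \<Rightarrow> nat \<Rightarrow> 'a::field" where
  "mk m i j k = (if i = 0 then (if j = k then 1 else 0) else if j = 0 then (if i = k then 1 else 0) else m i j k)"

definition m5 :: "nat \<Rightarrow> nat \<Rightarrow> nat \<Rightarrow> 'a::field" where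
  "m5 i j k = (if (i = 1 \<and> j = 1 \<and> k = 2) \<or> (i = 2 \<and> j = 2 \<and> k = 3) then 1 else 0)"

lemma mult5: "amult (mk m5) 4 x y = (\<lambda>k. if k = 0 then x 0 * y 0 else if k = 1 then x 0 * y 1 + x 1 * y 0
   else if k = 2 then x 0 * y 2 + x 2 * y 0 + x 1 * y 1 else if k = 3 then x 0 * y 3 + x 3 * y 0 + x 2 * y 2 else 0)"
  unfolding amult_def mk_def m5_def
  by (rule ext) (simp add: eval_nat_numeral lessThan_Suc)

lemma k4_cases: "(k::nat) = 0 \<or> k = 1 \<or> k = 2 \<or> k = 3 \<or> k \<ge> 4" by arith

lemma unit5: "is_unit (mk m5) 4 (ev 0 :: 'a::field vect)"
  unfolding is_unit_def
proof (intro conjI ballI ev_vecs)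
  fix x :: "'a vect" assume x: "x \<in> vecs 4"
  show "amult (mk m5) 4 (ev 0) x = x" "amult (mk m5) 4 x (ev 0) = x"
    by (rule ext, subst mult5, use k4_cases x in \<open>auto simp: ev_def vecs_def\<close>)+
qed simp

lemma aone5: "aone (mk m5) 4 = (ev 0 :: 'a::field vect)"
  by (rule aone_eq[OF unit5])

lemma tri5:
  fixes S :: "'a::field vect set"
  assumes S: "S \<subseteq> vecs 4" and s: "s \<in> S" and a: "s 1 \<noteq> 0"
  shows "Lsp (mk m5) 4 S 4 = vecs 4"
proof
  show "Lsp (mk m5) 4 S 4 \<subseteq> vecs 4" by (rule Lsp_vecs[OF unit5 S])
  let ?L = "\<lambda>i. Lsp (mk m5) 4 S i"
  have sv: "s k = 0" if "k \<ge> 4" for k using S s that unfolding vecs_def by blast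
  define m where "m = (\<lambda>k. 1 * s k + (- s 0) * ev 0 k)"
  have e0: "ev 0 \<in> ?L i" for i using aone_Lsp[of "mk m5" 4 S i] aone5 by metis
  have m1: "m \<in> ?L 1" unfolding m_def by (rule Lsp_lin[OF gen_Lsp[OF s] e0]) simp
  define p where "p = amult (mk m5) 4 m m"
  have p2: "p \<in> ?L 2" unfolding p_def using Lsp_mult[OF m1 m1] by (metis one_add_one)
  define q where "q = amult (mk m5) 4 p p"
  have q4: "q \<in> ?L 4" unfolding q_def using Lsp_mult[OF p2 p2] by simp
  have m4: "m \<in> ?L 4" using m1 Lsp_mono[of 1 4] by auto
  have p4: "p \<in> ?L 4" using p2 Lsp_mono[of 2 4] by auto
  have "ev 3 = (\<lambda>k. (1 / (s 1 * s 1 * (s 1 * s 1))) * q k)"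
    by (rule ext, use k4_cases a in \<open>auto simp: q_def p_def m_def mult5 ev_def field_simps\<close>)
  then have e3: "ev 3 \<in> ?L 4" using Lsp_smult[OF q4] by metis
  have "ev 2 = (\<lambda>k. (1 / s 1 ^ 2) * p k + (- (s 2 ^ 2 / s 1 ^ 2)) * ev 3 k)"
    by (rule ext, use k4_cases a in \<open>auto simp: p_def m_def mult5 ev_def field_simps power2_eq_square\<close>)
  then have e2: "ev 2 \<in> ?L 4" using Lsp_lin[OF p4 e3] by metis
  define r where "r = (\<lambda>k. 1 * m k + (- s 2) * ev 2 k)"
  have r4: "r \<in> ?L 4" unfolding r_def by (rule Lsp_lin[OF m4 e2])
  have "ev 1 = (\<lambda>k. (1 / s 1) * r k + (- (s 3 / s 1)) * ev 3 k)"
    by (rule ext, use k4_cases a sv in \<open>auto simp: r_def m_def ev_def field_simps\<close>)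
  then have e1: "ev 1 \<in> ?L 4" using Lsp_lin[OF r4 e3] by metis
  have "\<forall>i<4. ev i \<in> ?L 4" using e0 e1 e2 e3 by (auto simp: eval_nat_numeral less_Suc_eq)
  then show "vecs 4 \<subseteq> ?L 4" unfolding Lsp_def by (rule vecs_lspan)
qed

lemma alg5: "unital_alg (mk m5 :: nat \<Rightarrow> nat \<Rightarrow> nat \<Rightarrow> 'a::field) 4 \<and> alg_length (mk m5 :: nat \<Rightarrow> nat \<Rightarrow> nat \<Rightarrow> 'a) 4 4"
proof
  show "unital_alg (mk m5 :: nat \<Rightarrow> nat \<Rightarrow> nat \<Rightarrow> 'a::field) 4" unfolding unital_alg_def using unit5 by blast
  let ?c = "mk m5 :: nat \<Rightarrow> nat \<Rightarrow> nat \<Rightarrow> 'a"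
  let ?S0 = "{ev 1} :: 'a vect set"
  have S0: "?S0 \<subseteq> vecs 4" using ev_vecs[of 1 4] by auto
  have L0: "Lsp ?c 4 ?S0 4 = vecs 4" by (rule tri5[OF S0, of "ev 1"]) (auto simp: ev_def)
  have gen0: "generating ?c 4 ?S0" unfolding generating_def using S0 L0 by blast
  define G where "G (i::nat) (v::nat \<Rightarrow> 'a) = ((i < 1 \<longrightarrow> v 1 = 0) \<and> (i < 2 \<longrightarrow> v 2 = 0) \<and> (i < 4 \<longrightarrow> v 3 = (0::'a)))" for i v
  have inv: "G j x" if "word ?c 4 ?S0 j x" for j x
  proof (rule word_inv[OF _ _ _ that])
    show "G 0 (aone ?c 4)" unfolding aone5 G_def by (simp add: ev_def)
    show "G 1 s" if "s \<in> ?S0" for s using that unfolding G_def by (simp add: ev_def)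
    show "G (i + j) (amult ?c 4 x y)" if "G i x" "G j y" for i j x y
      using that unfolding G_def mult5 by auto
  qed
  have "set_length ?c 4 ?S0 = 4"
  proof (rule set_length_eq[OF L0])
    fix k :: nat assume "k < 4"
    show "Lsp ?c 4 ?S0 k \<noteq> vecs 4"
      by (rule Lsp_ne[of _ _ _ 4 3]) (use inv \<open>k < 4\<close> in \<open>auto simp: G_def\<close>)
  qed
  then show "alg_length ?c 4 4"
  proof (rule alg_length_intro[OF gen0])
    fix S :: "'a vect set" assume g: "generating ?c 4 S"
    have "\<exists>s\<in>S. s 1 \<noteq> 0"
      by (rule gen_coord[OF _ _ _ g]) (auto simp: aone5 ev_def mult5)
    then show "Lsp ?c 4 S 4 = vecs 4" using tri5 g unfolding generating_def by blast
  qed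
qed

definition m4 :: "nat \<Rightarrow> nat \<Rightarrow> nat \<Rightarrow> 'a::field" where
  "m4 i j k = (if (i = 1 \<and> j = 1 \<and> k = 2) \<or> (i = 1 \<and> j = 2 \<and> k = 3) then 1 else 0)"

lemma mult4: "amult (mk m4) 4 x y = (\<lambda>k. if k = 0 then x 0 * y 0 else if k = 1 then x 0 * y 1 + x 1 * y 0
   else if k = 2 then x 0 * y 2 + x 2 * y 0 + x 1 * y 1 else if k = 3 then x 0 * y 3 + x 3 * y 0 + x 1 * y 2 else 0)"
  unfolding amult_def mk_def m4_def
  by (rule ext) (simp add: eval_nat_numeral lessThan_Suc)

lemma unit4: "is_unit (mk m4) 4 (ev 0 :: 'a::field vect)"
  unfolding is_unit_def
proof (intro conjI ballI ev_vecs)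
  fix x :: "'a vect" assume x: "x \<in> vecs 4"
  show "amult (mk m4) 4 (ev 0) x = x" "amult (mk m4) 4 x (ev 0) = x"
    by (rule ext, subst mult4, use k4_cases x in \<open>auto simp: ev_def vecs_def\<close>)+
qed simp

lemma aone4: "aone (mk m4) 4 = (ev 0 :: 'a::field vect)"
  by (rule aone_eq[OF unit4])

lemma tri4:
  fixes S :: "'a::field vect set"
  assumes S: "S \<subseteq> vecs 4" and s: "s \<in> S" and a: "s 1 \<noteq> 0"
  shows "Lsp (mk m4) 4 S 3 = vecs 4"
proof
  show "Lsp (mk m4) 4 S 3 \<subseteq> vecs 4" by (rule Lsp_vecs[OF unit4 S])
  let ?L = "\<lambda>i. Lsp (mk m4) 4 S i"
  have sv: "s k = 0" if "k \<ge> 4" for k using S s that unfolding vecs_def by blast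
  define m where "m = (\<lambda>k. 1 * s k + (- s 0) * ev 0 k)"
  have e0: "ev 0 \<in> ?L i" for i using aone_Lsp[of "mk m4" 4 S i] aone4 by metis
  have m1: "m \<in> ?L 1" unfolding m_def by (rule Lsp_lin[OF gen_Lsp[OF s] e0]) simp
  define p where "p = amult (mk m4) 4 m m"
  have p2: "p \<in> ?L 2" unfolding p_def using Lsp_mult[OF m1 m1] by (metis one_add_one)
  define q where "q = amult (mk m4) 4 m p"
  have q3: "q \<in> ?L 3" unfolding q_def using Lsp_mult[OF m1 p2] by (simp add: numeral_3_eq_3)
  have m3: "m \<in> ?L 3" using m1 Lsp_mono[of 1 3] by auto
  have p3: "p \<in> ?L 3" using p2 Lsp_mono[of 2 3] by auto
  have "ev 3 = (\<lambda>k. (1 / (s 1 * s 1 * s 1)) * q k)"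
    by (rule ext, use k4_cases a in \<open>auto simp: q_def p_def m_def mult4 ev_def field_simps\<close>)
  then have e3: "ev 3 \<in> ?L 3" using Lsp_smult[OF q3] by metis
  have "ev 2 = (\<lambda>k. (1 / (s 1 * s 1)) * p k + (- (s 2 / s 1)) * ev 3 k)"
    by (rule ext, use k4_cases a in \<open>auto simp: p_def m_def mult4 ev_def field_simps\<close>)
  then have e2: "ev 2 \<in> ?L 3" using Lsp_lin[OF p3 e3] by metis
  define r where "r = (\<lambda>k. 1 * m k + (- s 2) * ev 2 k)"
  have r3: "r \<in> ?L 3" unfolding r_def by (rule Lsp_lin[OF m3 e2])
  have "ev 1 = (\<lambda>k. (1 / s 1) * r k + (- (s 3 / s 1)) * ev 3 k)"
    by (rule ext, use k4_cases a sv in \<open>auto simp: r_def m_def ev_def field_simps\<close>)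
  then have e1: "ev 1 \<in> ?L 3" using Lsp_lin[OF r3 e3] by metis
  have "\<forall>i<4. ev i \<in> ?L 3" using e0 e1 e2 e3 by (auto simp: eval_nat_numeral less_Suc_eq)
  then show "vecs 4 \<subseteq> ?L 3" unfolding Lsp_def by (rule vecs_lspan)
qed

lemma alg4: "unital_alg (mk m4 :: nat \<Rightarrow> nat \<Rightarrow> nat \<Rightarrow> 'a::field) 4 \<and> alg_length (mk m4 :: nat \<Rightarrow> nat \<Rightarrow> nat \<Rightarrow> 'a) 4 3"
proof
  show "unital_alg (mk m4 :: nat \<Rightarrow> nat \<Rightarrow> nat \<Rightarrow> 'a::field) 4" unfolding unital_alg_def using unit4 by blast
  let ?c = "mk m4 :: nat \<Rightarrow> nat \<Rightarrow> nat \<Rightarrow> 'a"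
  let ?S0 = "{ev 1} :: 'a vect set"
  have S0: "?S0 \<subseteq> vecs 4" using ev_vecs[of 1 4] by auto
  have L0: "Lsp ?c 4 ?S0 3 = vecs 4" by (rule tri4[OF S0, of "ev 1"]) (auto simp: ev_def)
  have gen0: "generating ?c 4 ?S0" unfolding generating_def using S0 L0 by blast
  define G where "G (i::nat) (v::nat \<Rightarrow> 'a) = ((i < 1 \<longrightarrow> v 1 = 0) \<and> (i < 2 \<longrightarrow> v 2 = 0) \<and> (i < 3 \<longrightarrow> v 3 = (0::'a)))" for i v
  have inv: "G j x" if "word ?c 4 ?S0 j x" for j x
  proof (rule word_inv[OF _ _ _ that])
    show "G 0 (aone ?c 4)" unfolding aone4 G_def by (simp add: ev_def)
    show "G 1 s" if "s \<in> ?S0" for s using that unfolding G_def by (simp add: ev_def)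
    show "G (i + j) (amult ?c 4 x y)" if "G i x" "G j y" for i j x y
      using that unfolding G_def mult4 by auto
  qed
  have "set_length ?c 4 ?S0 = 3"
  proof (rule set_length_eq[OF L0])
    fix k :: nat assume "k < 3"
    show "Lsp ?c 4 ?S0 k \<noteq> vecs 4"
      by (rule Lsp_ne[of _ _ _ 3 3]) (use inv \<open>k < 3\<close> in \<open>auto simp: G_def\<close>)
  qed
  then show "alg_length ?c 4 3"
  proof (rule alg_length_intro[OF gen0])
    fix S :: "'a vect set" assume g: "generating ?c 4 S"
    have "\<exists>s\<in>S. s 1 \<noteq> 0"
      by (rule gen_coord[OF _ _ _ g]) (auto simp: aone4 ev_def mult4)
    then show "Lsp ?c 4 S 3 = vecs 4" using tri4 g unfolding generating_def by blast
  qed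
qed

definition m2 :: "nat \<Rightarrow> nat \<Rightarrow> nat \<Rightarrow> 'a::field" where
  "m2 i j k = (if i = 1 \<and> j = 1 \<and> k = 2 then 1 else 0)"

lemma mult2: "amult (mk m2) 3 x y = (\<lambda>k. if k = 0 then x 0 * y 0 else if k = 1 then x 0 * y 1 + x 1 * y 0
   else if k = 2 then x 0 * y 2 + x 2 * y 0 + x 1 * y 1 else 0)"
  unfolding amult_def mk_def m2_def
  by (rule ext) (simp add: eval_nat_numeral lessThan_Suc)

lemma k3_cases: "(k::nat) = 0 \<or> k = 1 \<or> k = 2 \<or> k \<ge> 3" by arith

lemma unit2: "is_unit (mk m2) 3 (ev 0 :: 'a::field vect)"
  unfolding is_unit_def
proof (intro conjI ballI ev_vecs)
  fix x :: "'a vect" assume x: "x \<in> vecs 3"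
  show "amult (mk m2) 3 (ev 0) x = x" "amult (mk m2) 3 x (ev 0) = x"
    by (rule ext, subst mult2, use k3_cases x in \<open>auto simp: ev_def vecs_def\<close>)+
qed simp

lemma aone2: "aone (mk m2) 3 = (ev 0 :: 'a::field vect)"
  by (rule aone_eq[OF unit2])

lemma tri2:
  fixes S :: "'a::field vect set"
  assumes S: "S \<subseteq> vecs 3" and s: "s \<in> S" and a: "s 1 \<noteq> 0"
  shows "Lsp (mk m2) 3 S 2 = vecs 3"
proof
  show "Lsp (mk m2) 3 S 2 \<subseteq> vecs 3" by (rule Lsp_vecs[OF unit2 S])
  let ?L = "\<lambda>i. Lsp (mk m2) 3 S i"
  have sv: "s k = 0" if "k \<ge> 3" for k using S s that unfolding vecs_def by blast
  define m where "m = (\<lambda>k. 1 * s k + (- s 0) * ev 0 k)"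
  have e0: "ev 0 \<in> ?L i" for i using aone_Lsp[of "mk m2" 3 S i] aone2 by metis
  have m1: "m \<in> ?L 1" unfolding m_def by (rule Lsp_lin[OF gen_Lsp[OF s] e0]) simp
  define p where "p = amult (mk m2) 3 m m"
  have p2: "p \<in> ?L 2" unfolding p_def using Lsp_mult[OF m1 m1] by (metis one_add_one)
  have m2: "m \<in> ?L 2" using m1 Lsp_mono[of 1 2] by auto
  have "ev 2 = (\<lambda>k. (1 / (s 1 * s 1)) * p k)"
    by (rule ext, use k3_cases a in \<open>auto simp: p_def m_def mult2 ev_def field_simps\<close>)
  then have e2: "ev 2 \<in> ?L 2" using Lsp_smult[OF p2] by metis
  have "ev 1 = (\<lambda>k. (1 / s 1) * m k + (- (s 2 / s 1)) * ev 2 k)"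
    by (rule ext, use k3_cases a sv in \<open>auto simp: m_def ev_def field_simps\<close>)
  then have e1: "ev 1 \<in> ?L 2" using Lsp_lin[OF m2 e2] by metis
  have "\<forall>i<3. ev i \<in> ?L 2" using e0 e1 e2 by (auto simp: eval_nat_numeral less_Suc_eq)
  then show "vecs 3 \<subseteq> ?L 2" unfolding Lsp_def by (rule vecs_lspan)
qed

lemma alg2: "unital_alg (mk m2 :: nat \<Rightarrow> nat \<Rightarrow> nat \<Rightarrow> 'a::field) 3 \<and> alg_length (mk m2 :: nat \<Rightarrow> nat \<Rightarrow> nat \<Rightarrow> 'a) 3 2"
proof
  show "unital_alg (mk m2 :: nat \<Rightarrow> nat \<Rightarrow> nat \<Rightarrow> 'a::field) 3" unfolding unital_alg_def using unit2 by blast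
  let ?c = "mk m2 :: nat \<Rightarrow> nat \<Rightarrow> nat \<Rightarrow> 'a"
  let ?S0 = "{ev 1} :: 'a vect set"
  have S0: "?S0 \<subseteq> vecs 3" using ev_vecs[of 1 3] by auto
  have L0: "Lsp ?c 3 ?S0 2 = vecs 3" by (rule tri2[OF S0, of "ev 1"]) (auto simp: ev_def)
  have gen0: "generating ?c 3 ?S0" unfolding generating_def using S0 L0 by blast
  define G where "G (i::nat) (v::nat \<Rightarrow> 'a) = ((i < 1 \<longrightarrow> v 1 = 0) \<and> (i < 2 \<longrightarrow> v 2 = (0::'a)))" for i v
  have inv: "G j x" if "word ?c 3 ?S0 j x" for j x
  proof (rule word_inv[OF _ _ _ that])
    show "G 0 (aone ?c 3)" unfolding aone2 G_def by (simp add: ev_def)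
    show "G 1 s" if "s \<in> ?S0" for s using that unfolding G_def by (simp add: ev_def)
    show "G (i + j) (amult ?c 3 x y)" if "G i x" "G j y" for i j x y
      using that unfolding G_def mult2 by auto
  qed
  have "set_length ?c 3 ?S0 = 2"
  proof (rule set_length_eq[OF L0])
    fix k :: nat assume "k < 2"
    show "Lsp ?c 3 ?S0 k \<noteq> vecs 3"
      by (rule Lsp_ne[of _ _ _ 2 2]) (use inv \<open>k < 2\<close> in \<open>auto simp: G_def\<close>)
  qed
  then show "alg_length ?c 3 2"
  proof (rule alg_length_intro[OF gen0])
    fix S :: "'a vect set" assume g: "generating ?c 3 S"
    have "\<exists>s\<in>S. s 1 \<noteq> 0"
      by (rule gen_coord[OF _ _ _ g]) (auto simp: aone2 ev_def mult2)
    then show "Lsp ?c 3 S 2 = vecs 3" using tri2 g unfolding generating_def by blast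
  qed
qed

lemma mult3: "amult (mk m2) 4 x y = (\<lambda>k. if k = 0 then x 0 * y 0 else if k = 1 then x 0 * y 1 + x 1 * y 0
   else if k = 2 then x 0 * y 2 + x 2 * y 0 + x 1 * y 1 else if k = 3 then x 0 * y 3 + x 3 * y 0 else 0)"
  unfolding amult_def mk_def m2_def
  by (rule ext) (simp add: eval_nat_numeral lessThan_Suc)

lemma unit3: "is_unit (mk m2) 4 (ev 0 :: 'a::field vect)"
  unfolding is_unit_def
proof (intro conjI ballI ev_vecs)
  fix x :: "'a vect" assume x: "x \<in> vecs 4"
  show "amult (mk m2) 4 (ev 0) x = x" "amult (mk m2) 4 x (ev 0) = x"
    by (rule ext, subst mult3, use k4_cases x in \<open>auto simp: ev_def vecs_def\<close>)+
qed simp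

lemma aone3: "aone (mk m2) 4 = (ev 0 :: 'a::field vect)"
  by (rule aone_eq[OF unit3])

lemma alg3: "unital_alg (mk m2 :: nat \<Rightarrow> nat \<Rightarrow> nat \<Rightarrow> 'a::field) 4 \<and> alg_length (mk m2 :: nat \<Rightarrow> nat \<Rightarrow> nat \<Rightarrow> 'a) 4 2"
proof
  show "unital_alg (mk m2 :: nat \<Rightarrow> nat \<Rightarrow> nat \<Rightarrow> 'a::field) 4" unfolding unital_alg_def using unit3 by blast
  let ?c = "mk m2 :: nat \<Rightarrow> nat \<Rightarrow> nat \<Rightarrow> 'a"
  let ?S0 = "{ev 1, ev 3} :: 'a vect set"
  have S0: "?S0 \<subseteq> vecs 4" using ev_vecs[of 1 4] ev_vecs[of 3 4] by auto
  have L0: "Lsp ?c 4 ?S0 2 = vecs 4"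
  proof
    show "Lsp ?c 4 ?S0 2 \<subseteq> vecs 4" by (rule Lsp_vecs[OF unit3 S0])
    have e0: "ev 0 \<in> Lsp ?c 4 ?S0 2" using aone_Lsp[of ?c 4 ?S0 2] aone3 by metis
    have e1: "ev 1 \<in> Lsp ?c 4 ?S0 1" by (rule gen_Lsp) auto
    have e1': "ev 1 \<in> Lsp ?c 4 ?S0 2" by (rule gen_Lsp) auto
    have e3: "ev 3 \<in> Lsp ?c 4 ?S0 2" by (rule gen_Lsp) auto
    have "amult ?c 4 (ev 1) (ev 1) \<in> Lsp ?c 4 ?S0 2" using Lsp_mult[OF e1 e1] by (metis one_add_one)
    moreover have "amult ?c 4 (ev 1) (ev 1) = ev 2"
      by (rule ext, use k4_cases in \<open>auto simp: mult3 ev_def\<close>)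
    ultimately have e2: "ev 2 \<in> Lsp ?c 4 ?S0 2" by simp
    have "\<forall>i<4. ev i \<in> Lsp ?c 4 ?S0 2" using e0 e1' e2 e3 by (auto simp: eval_nat_numeral less_Suc_eq)
    then show "vecs 4 \<subseteq> Lsp ?c 4 ?S0 2" unfolding Lsp_def by (rule vecs_lspan)
  qed
  have gen0: "generating ?c 4 ?S0" unfolding generating_def using S0 L0 by blast
  define G where "G (i::nat) (v::nat \<Rightarrow> 'a) = ((i < 1 \<longrightarrow> v 1 = 0 \<and> v 3 = 0) \<and> (i < 2 \<longrightarrow> v 2 = (0::'a)))" for i v
  have inv: "G j x" if "word ?c 4 ?S0 j x" for j x
  proof (rule word_inv[OF _ _ _ that])
    show "G 0 (aone ?c 4)" unfolding aone3 G_def by (simp add: ev_def)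
    show "G 1 s" if "s \<in> ?S0" for s using that unfolding G_def by (auto simp: ev_def)
    show "G (i + j) (amult ?c 4 x y)" if "G i x" "G j y" for i j x y
      using that unfolding G_def mult3 by auto
  qed
  have "set_length ?c 4 ?S0 = 2"
  proof (rule set_length_eq[OF L0])
    fix k :: nat assume "k < 2"
    show "Lsp ?c 4 ?S0 k \<noteq> vecs 4"
      by (rule Lsp_ne[of _ _ _ 2 2]) (use inv \<open>k < 2\<close> in \<open>auto simp: G_def\<close>)
  qed
  then show "alg_length ?c 4 2"
  proof (rule alg_length_intro[OF gen0])
    fix S :: "'a vect set" assume g: "generating ?c 4 S"
    have S: "S \<subseteq> vecs 4" and "\<exists>k. Lsp ?c 4 S k = vecs 4" using g unfolding generating_def by auto
    then obtain k where k: "Lsp ?c 4 S k = vecs 4" by blast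
    have "\<exists>s\<in>S. s 1 \<noteq> 0"
      by (rule gen_coord[OF _ _ _ g]) (auto simp: aone3 ev_def mult3)
    then obtain s where s: "s \<in> S" and a: "s 1 \<noteq> 0" by blast
    let ?L = "\<lambda>i. Lsp ?c 4 S i"
    define m where "m = (\<lambda>k. 1 * s k + (- s 0) * ev 0 k)"
    have e0: "ev 0 \<in> ?L i" for i using aone_Lsp[of ?c 4 S i] aone3 by metis
    have m1: "m \<in> ?L 1" unfolding m_def by (rule Lsp_lin[OF gen_Lsp[OF s] e0]) simp
    define p where "p = amult ?c 4 m m"
    have p2: "p \<in> ?L 2" unfolding p_def using Lsp_mult[OF m1 m1] by (metis one_add_one)
    have "ev 2 = (\<lambda>k. (1 / (s 1 * s 1)) * p k)"
      by (rule ext, use k4_cases a in \<open>auto simp: p_def m_def mult3 ev_def field_simps\<close>)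
    then have e2: "ev 2 \<in> ?L 2" using Lsp_smult[OF p2] by metis
    define B where "B = insert (ev 0) (insert (ev 2) S)"
    have B: "B \<subseteq> vecs 4" unfolding B_def using S ev_vecs[of 0 4] ev_vecs[of 2 4] by auto
    have BL: "B \<subseteq> ?L 2" unfolding B_def using e0 e2 gen_Lsp[of _ S 2 ?c 4] by auto
    have "?L k \<subseteq> lspan B"
    proof (rule Lsp_closed)
      show "aone ?c 4 \<in> lspan B" unfolding aone3 B_def by (rule lspan_base) simp
      show "S \<subseteq> lspan B" unfolding B_def by (auto intro: lspan_base)
      fix x y assume x: "x \<in> lspan B" and y: "y \<in> lspan B"
      have xv: "x \<in> vecs 4" and yv: "y \<in> vecs 4" using x y lspan_vecs[OF B] by auto
      have b0: "ev 0 \<in> lspan B" and b2: "ev 2 \<in> lspan B" unfolding B_def by (auto intro: lspan_base)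
      have t1: "(\<lambda>k. x 0 * y k + y 0 * x k) \<in> lspan B" by (rule lspan_lin[OF y x])
      have t2: "(\<lambda>k. (- (x 0 * y 0)) * ev 0 k + (x 1 * y 1) * ev 2 k) \<in> lspan B" by (rule lspan_lin[OF b0 b2])
      have "amult ?c 4 x y = (\<lambda>k. (x 0 * y k + y 0 * x k) + ((- (x 0 * y 0)) * ev 0 k + (x 1 * y 1) * ev 2 k))"
        by (rule ext, use k4_cases xv yv in \<open>auto simp: mult3 ev_def vecs_def algebra_simps\<close>)
      then show "amult ?c 4 x y \<in> lspan B" using lspan_add[OF t1 t2] by simp
    qed
    also have "lspan B \<subseteq> ?L 2" unfolding Lsp_def by (rule lspan_subset) (use BL in \<open>simp add: Lsp_def\<close>)
    finally have "vecs 4 \<subseteq> ?L 2" using k by simp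
    then show "?L 2 = vecs 4" using Lsp_vecs[OF unit3 S] by blast
  qed
qed

definition m0 :: "nat \<Rightarrow> nat \<Rightarrow> nat \<Rightarrow> 'a::field" where "m0 i j k = 0"

lemma mult1: assumes "n \<in> {2, 3, 4}"
  shows "amult (mk m0) n x y = (\<lambda>k. if k < n then x 0 * y k + x k * y 0 - (if k = 0 then x 0 * y 0 else 0) else 0)"
proof (rule ext)
  fix k
  show "amult (mk m0) n x y k = (if k < n then x 0 * y k + x k * y 0 - (if k = 0 then x 0 * y 0 else 0) else 0)"
    using assms k4_cases[of k] unfolding amult_def mk_def m0_def
    by (auto simp: eval_nat_numeral lessThan_Suc)
qed

lemma unit1: assumes n: "n \<in> {2, 3, 4}" shows "is_unit (mk m0) n (ev 0 :: 'a::field vect)"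
  unfolding is_unit_def
proof (intro conjI ballI ev_vecs)
  fix x :: "'a vect" assume x: "x \<in> vecs n"
  show "amult (mk m0) n (ev 0) x = x" "amult (mk m0) n x (ev 0) = x"
    by (rule ext, subst mult1[OF n], use x in \<open>auto simp: ev_def vecs_def\<close>)+
qed (use n in auto)

lemma aone1: "n \<in> {2, 3, 4} \<Longrightarrow> aone (mk m0) n = (ev 0 :: 'a::field vect)"
  by (rule aone_eq[OF unit1])

lemma alg1:
  assumes n: "n \<in> {2, 3, 4}"
  shows "unital_alg (mk m0 :: nat \<Rightarrow> nat \<Rightarrow> nat \<Rightarrow> 'a::field) n \<and> alg_length (mk m0 :: nat \<Rightarrow> nat \<Rightarrow> nat \<Rightarrow> 'a) n 1"
proof
  show "unital_alg (mk m0 :: nat \<Rightarrow> nat \<Rightarrow> nat \<Rightarrow> 'a::field) n" unfolding unital_alg_def using unit1[OF n] by blast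
  let ?c = "mk m0 :: nat \<Rightarrow> nat \<Rightarrow> nat \<Rightarrow> 'a"
  let ?S0 = "ev ` {1..<n} :: 'a vect set"
  have n1: "1 < n" using n by auto
  have S0: "?S0 \<subseteq> vecs n" using ev_vecs by auto
  have L0: "Lsp ?c n ?S0 1 = vecs n"
  proof
    show "Lsp ?c n ?S0 1 \<subseteq> vecs n" by (rule Lsp_vecs[OF unit1[OF n] S0])
    have e0: "ev 0 \<in> Lsp ?c n ?S0 1" using aone_Lsp[of ?c n ?S0 1] aone1[OF n] by metis
    have "\<forall>i<n. ev i \<in> Lsp ?c n ?S0 1"
    proof (intro allI impI)
      fix i assume "i < n"
      then show "ev i \<in> Lsp ?c n ?S0 1" using e0 by (cases "i = 0") (auto intro: gen_Lsp)
    qed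
    then show "vecs n \<subseteq> Lsp ?c n ?S0 1" unfolding Lsp_def by (rule vecs_lspan)
  qed
  have gen0: "generating ?c n ?S0" unfolding generating_def using S0 L0 by blast
  define G where "G (i::nat) (v::nat \<Rightarrow> 'a) = (i < 1 \<longrightarrow> v 1 = 0)" for i v
  have inv: "G j x" if "word ?c n ?S0 j x" for j x
  proof (rule word_inv[OF _ _ _ that])
    show "G 0 (aone ?c n)" unfolding aone1[OF n] G_def by (simp add: ev_def)
    show "G 1 s" if "s \<in> ?S0" for s using that unfolding G_def by (auto simp: ev_def)
    show "G (i + j) (amult ?c n x y)" if "G i x" "G j y" for i j x y
      using that n1 unfolding G_def mult1[OF n] by auto
  qed
  have "set_length ?c n ?S0 = 1"
  proof (rule set_length_eq[OF L0])
    fix k :: nat assume "k < 1"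
    show "Lsp ?c n ?S0 k \<noteq> vecs n"
      by (rule Lsp_ne[of _ _ _ 1 1]) (use inv \<open>k < 1\<close> n1 in \<open>auto simp: G_def\<close>)
  qed
  then show "alg_length ?c n 1"
  proof (rule alg_length_intro[OF gen0])
    fix S :: "'a vect set" assume g: "generating ?c n S"
    have S: "S \<subseteq> vecs n" and "\<exists>k. Lsp ?c n S k = vecs n" using g unfolding generating_def by auto
    then obtain k where k: "Lsp ?c n S k = vecs n" by blast
    let ?L = "\<lambda>i. Lsp ?c n S i"
    have e0: "ev 0 \<in> ?L i" for i using aone_Lsp[of ?c n S i] aone1[OF n] by metis
    define B where "B = insert (ev 0) S"
    have B: "B \<subseteq> vecs n" unfolding B_def using S ev_vecs[of 0 n] n1 by auto
    have BL: "B \<subseteq> ?L 1" unfolding B_def using e0 gen_Lsp[of _ S 1 ?c n] by auto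
    have "?L k \<subseteq> lspan B"
    proof (rule Lsp_closed)
      show "aone ?c n \<in> lspan B" unfolding aone1[OF n] B_def by (rule lspan_base) simp
      show "S \<subseteq> lspan B" unfolding B_def by (auto intro: lspan_base)
      fix x y assume x: "x \<in> lspan B" and y: "y \<in> lspan B"
      have xv: "x \<in> vecs n" and yv: "y \<in> vecs n" using x y lspan_vecs[OF B] by auto
      have b0: "ev 0 \<in> lspan B" unfolding B_def by (auto intro: lspan_base)
      have t1: "(\<lambda>k. x 0 * y k + y 0 * x k) \<in> lspan B" by (rule lspan_lin[OF y x])
      have t2: "(\<lambda>k. (- (x 0 * y 0)) * ev 0 k) \<in> lspan B" by (rule lspan_smult[OF b0])
      have "amult ?c n x y = (\<lambda>k. (x 0 * y k + y 0 * x k) + (- (x 0 * y 0)) * ev 0 k)"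
        by (rule ext, use n1 xv yv in \<open>auto simp: mult1[OF n] ev_def vecs_def algebra_simps\<close>)
      then show "amult ?c n x y \<in> lspan B" using lspan_add[OF t1 t2] by simp
    qed
    also have "lspan B \<subseteq> ?L 1" unfolding Lsp_def by (rule lspan_subset) (use BL in \<open>simp add: Lsp_def\<close>)
    finally have "vecs n \<subseteq> ?L 1" using k by simp
    then show "?L 1 = vecs n" using Lsp_vecs[OF unit1[OF n] S] by blast
  qed
qed

theorem proposition3p7:
  fixes n l :: nat
  assumes "n \<in> {2, 3, 4}" and "1 \<le> l" and "l \<le> 2 ^ (n - 2)"
  shows "\<exists>c :: nat \<Rightarrow> nat \<Rightarrow> nat \<Rightarrow> 'a::field. unital_alg c n \<and> alg_length c n l"
proof -
  have "l = 1 \<or> (n = 3 \<and> l = 2) \<or> (n = 4 \<and> l = 2) \<or> (n = 4 \<and> l = 3) \<or> (n = 4 \<and> l = 4)"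
    using assms by auto
  then show ?thesis
    using alg1[OF assms(1)] alg2 alg3 alg4 alg5 by blast
qed

end
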